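(* Let $G=(V,E)$ be a graph with a partition $(A,B)$ of its vertex set. Let $G_1=(V,E_1)$ with $E_1=E\cup\{\{a,b\}: a,b\in B,\ a\neq b\}$. Then $\mathrm{box}(G_1)\le 2\,\mathrm{box}(G)$.
   Context: An interval graph is the intersection graph of a finite family of intervals of the real line. A box representation of dimension $k$ of $G=(V,E)$ is a family of $k$ interval graphs $I_1,\dots,I_k$ on vertex set $V$ with $E=E(I_1)\cap\cdots\cap E(I_k)$; the boxicity $\mathrm{box}(G)$ is the minimum such $k$. *)

theory Defs
  imports Complex_Main
begin

definition graph :: "'a set \<Rightarrow> ('a \<times> 'a) set \<Rightarrow> bool" where
  "graph V E \<longleftrightarrow> E \<subseteq> V \<times> V \<and> sym E \<and> (\<forall>v. (v, v) \<notin> E)"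

definition interval_edges :: "'a set \<Rightarrow> ('a \<Rightarrow> real) \<Rightarrow> ('a \<Rightarrow> real) \<Rightarrow> ('a \<times> 'a) set" where
  "interval_edges V l r =
     {(u, v). u \<in> V \<and> v \<in> V \<and> u \<noteq> v \<and> {l u..r u} \<inter> {l v..r v} \<noteq> {}}"

definition is_interval_graph :: "'a set \<Rightarrow> ('a \<times> 'a) set \<Rightarrow> bool" where
  "is_interval_graph V F \<longleftrightarrow>
     (\<exists>l r. (\<forall>v\<in>V. l v \<le> r v) \<and> F = interval_edges V l r)"

text \<open>A box representation of dimension k: k interval graphs I_0..I_{k-1} on V whose
edge sets intersect to E (the empty intersection being the complete graph on V).\<close>
definition box_rep :: "'a set \<Rightarrow> ('a \<times> 'a) set \<Rightarrow> nat \<Rightarrow> bool" where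
  "box_rep V E k \<longleftrightarrow>
     (\<exists>I :: nat \<Rightarrow> ('a \<times> 'a) set.
        (\<forall>i<k. is_interval_graph V (I i)) \<and>
        E = {(u, v). u \<in> V \<and> v \<in> V \<and> u \<noteq> v \<and> (\<forall>i<k. (u, v) \<in> I i)})"

definition boxicity :: "'a set \<Rightarrow> ('a \<times> 'a) set \<Rightarrow> nat" where
  "boxicity V E = (LEAST k. box_rep V E k)"

end

theory Submission
  imports Defs
begin

lemma ivl_int: "({a..b::real} \<inter> {c..d} \<noteq> {}) = (a \<le> b \<and> c \<le> d \<and> a \<le> d \<and> c \<le> b)"
proof
  assume "{a..b} \<inter> {c..d} \<noteq> {}" then show "a \<le> b \<and> c \<le> d \<and> a \<le> d \<and> c \<le> b" by auto
next
  assume h: "a \<le> b \<and> c \<le> d \<and> a \<le> d \<and> c \<le> b"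
  then have "max a c \<in> {a..b} \<inter> {c..d}" by auto
  then show "{a..b} \<inter> {c..d} \<noteq> {}" by blast
qed

lemma key:
  fixes m M lu ru lv rv :: real
  assumes "m \<le> lu" "lu \<le> ru" "ru \<le> M" "m \<le> lv" "lv \<le> rv" "rv \<le> M"
  shows "(({(if bu then m else lu)..ru} \<inter> {(if bv then m else lv)..rv} \<noteq> {}) \<and>
          ({lu..(if bu then M else ru)} \<inter> {lv..(if bv then M else rv)} \<noteq> {}))
     = ((bu \<and> bv) \<or> {lu..ru} \<inter> {lv..rv} \<noteq> {})"
  using assms unfolding ivl_int by (cases bu; cases bv) auto

lemma exists_rep:
  assumes "finite V" "graph V E"
  shows "\<exists>k. box_rep V E k"
proof -
  obtain f and n :: nat where V: "V = f ` {i. i < n}" using finite_imp_nat_seg_image_inj_on[OF assms(1)] by blast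
  define lx where "lx (x::'a) (v::'a) = (if v = x then 0 else if (x, v) \<in> E then 0 else (1::real))" for x v
  define rx where "rx (x::'a) (v::'a) = (if v = x then 0 else (1::real))" for x v
  define I where "I i = interval_edges V (lx (f i)) (rx (f i))" for i
  have "\<forall>i<n. is_interval_graph V (I i)"
    unfolding is_interval_graph_def I_def
    by (intro allI impI exI[of _ "lx (f _)"] exI[of _ "rx (f _)"]) (auto simp: lx_def rx_def)
  moreover have "E = {(u, v). u \<in> V \<and> v \<in> V \<and> u \<noteq> v \<and> (\<forall>i<n. (u, v) \<in> I i)}"
  proof (intro set_eqI iffI)
    fix p assume p: "p \<in> E"
    obtain u v where uv: "p = (u, v)" by (cases p)
    have vu: "(v, u) \<in> E" using p uv assms(2) unfolding graph_def sym_def by blast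
    have "u \<in> V" "v \<in> V" "u \<noteq> v" using p uv assms(2) unfolding graph_def by auto
    moreover have "(u, v) \<in> I i" for i
      unfolding I_def interval_edges_def ivl_int using p uv vu \<open>u \<in> V\<close> \<open>v \<in> V\<close> \<open>u \<noteq> v\<close>
      by (auto simp: lx_def rx_def)
    ultimately show "p \<in> {(u, v). u \<in> V \<and> v \<in> V \<and> u \<noteq> v \<and> (\<forall>i<n. (u, v) \<in> I i)}"
      using uv by auto
  next
    fix p assume "p \<in> {(u, v). u \<in> V \<and> v \<in> V \<and> u \<noteq> v \<and> (\<forall>i<n. (u, v) \<in> I i)}"
    then obtain u v where uv: "p = (u, v)" "u \<in> V" "v \<in> V" "u \<noteq> v" and all: "\<forall>i<n. (u, v) \<in> I i"
      by blast
    obtain i where i: "i < n" "u = f i" using uv(2) V by blast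
    have "(u, v) \<in> I i" using all i by blast
    then show "p \<in> E" using i uv
      unfolding I_def interval_edges_def ivl_int by (auto simp: lx_def rx_def split: if_splits)
  qed
  ultimately show ?thesis unfolding box_rep_def by blast
qed

theorem lemma5:
  fixes V A B :: "'a set" and E :: "('a \<times> 'a) set"
  assumes "finite V" and "graph V E"
    and "A \<union> B = V" and "A \<inter> B = {}"
  shows "boxicity V (E \<union> {(a, b). a \<in> B \<and> b \<in> B \<and> a \<noteq> b}) \<le> 2 * boxicity V E"
proof -
  define k where "k = boxicity V E"
  have "box_rep V E k"
    unfolding k_def boxicity_def using exists_rep[OF assms(1,2)] by (metis LeastI)
  then obtain I where I: "\<forall>i<k. is_interval_graph V (I i)"
    and EI: "E = {(u, v). u \<in> V \<and> v \<in> V \<and> u \<noteq> v \<and> (\<forall>i<k. (u, v) \<in> I i)}"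
    unfolding box_rep_def by blast
  have "\<forall>i. \<exists>l r. i < k \<longrightarrow> (\<forall>v\<in>V. l v \<le> r v) \<and> I i = interval_edges V l r"
    using I unfolding is_interval_graph_def by blast
  then obtain L R where LR: "\<And>i. i < k \<Longrightarrow> (\<forall>v\<in>V. L i v \<le> R i v) \<and> I i = interval_edges V (L i) (R i)"
    by metis
  define m where "m i = Min (L i ` V)" for i
  define M where "M i = Max (R i ` V)" for i
  have mle: "m i \<le> L i v" if "v \<in> V" for i v using that assms(1) unfolding m_def by simp
  have Mge: "R i v \<le> M i" if "v \<in> V" for i v using that assms(1) unfolding M_def by simp
  define J where "J j = (if j < k then interval_edges V (\<lambda>v. if v \<in> B then m j else L j v) (R j)
     else interval_edges V (L (j - k)) (\<lambda>v. if v \<in> B then M (j - k) else R (j - k) v))" for j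
  have Jint: "\<forall>j<2*k. is_interval_graph V (J j)"
  proof (intro allI impI)
    fix j assume j: "j < 2 * k"
    show "is_interval_graph V (J j)"
    proof (cases "j < k")
      case True
      then show ?thesis unfolding J_def is_interval_graph_def using LR[of j] mle[of _ j]
        by (intro exI[of _ "\<lambda>v. if v \<in> B then m j else L j v"] exI[of _ "R j"]) (auto intro: order_trans)
    next
      case False
      then have "j - k < k" using j by auto
      then show ?thesis unfolding J_def is_interval_graph_def using False LR[of "j-k"] Mge[of _ "j-k"]
        by (intro exI[of _ "L (j - k)"] exI[of _ "\<lambda>v. if v \<in> B then M (j - k) else R (j - k) v"])
          (auto intro: order_trans)
    qed
  qed
  have split: "(\<forall>j<2*k. P j) = (\<forall>i<k. P i \<and> P (i + k))" for P :: "nat \<Rightarrow> bool"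
  proof
    assume "\<forall>j<2*k. P j" then show "\<forall>i<k. P i \<and> P (i + k)" by auto
  next
    assume h: "\<forall>i<k. P i \<and> P (i + k)"
    show "\<forall>j<2*k. P j"
    proof (intro allI impI)
      fix j assume "j < 2 * k"
      show "P j"
      proof (cases "j < k")
        case True then show ?thesis using h by auto
      next
        case False then have "j = (j - k) + k" "j - k < k" using \<open>j < 2*k\<close> by auto
        then show ?thesis using h by metis
      qed
    qed
  qed
  have pair: "((u, v) \<in> J i \<and> (u, v) \<in> J (i + k)) = ((u \<in> B \<and> v \<in> B) \<or> (u, v) \<in> I i)"
    if "u \<in> V" "v \<in> V" "u \<noteq> v" "i < k" for u v i
  proof -
    have "((u, v) \<in> J i \<and> (u, v) \<in> J (i + k)) =
      (({(if u \<in> B then m i else L i u)..R i u} \<inter> {(if v \<in> B then m i else L i v)..R i v} \<noteq> {}) \<and>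
          ({L i u..(if u \<in> B then M i else R i u)} \<inter> {L i v..(if v \<in> B then M i else R i v)} \<noteq> {}))"
      using that unfolding J_def interval_edges_def by auto
    also have "\<dots> = ((u \<in> B \<and> v \<in> B) \<or> {L i u..R i u} \<inter> {L i v..R i v} \<noteq> {})"
      using that LR[of i] mle Mge by (intro key) auto
    also have "\<dots> = ((u \<in> B \<and> v \<in> B) \<or> (u, v) \<in> I i)"
      using that LR[of i] unfolding interval_edges_def by auto
    finally show ?thesis .
  qed
  have "E \<union> {(a, b). a \<in> B \<and> b \<in> B \<and> a \<noteq> b} =
      {(u, v). u \<in> V \<and> v \<in> V \<and> u \<noteq> v \<and> (\<forall>j<2*k. (u, v) \<in> J j)}"
  proof (intro set_eqI)
    fix p :: "'a \<times> 'a"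
    obtain u v where uv: "p = (u, v)" by (cases p)
    show "p \<in> E \<union> {(a, b). a \<in> B \<and> b \<in> B \<and> a \<noteq> b} \<longleftrightarrow>
      p \<in> {(u, v). u \<in> V \<and> v \<in> V \<and> u \<noteq> v \<and> (\<forall>j<2*k. (u, v) \<in> J j)}"
    proof (cases "u \<in> V \<and> v \<in> V \<and> u \<noteq> v")
      case True
      have "(\<forall>j<2*k. (u, v) \<in> J j) = (\<forall>i<k. (u \<in> B \<and> v \<in> B) \<or> (u, v) \<in> I i)"
        unfolding split using pair True by auto
      then show ?thesis using True uv EI by auto
    next
      case False
      then show ?thesis using uv EI assms(3) by auto
    qed
  qed
  then have "box_rep V (E \<union> {(a, b). a \<in> B \<and> b \<in> B \<and> a \<noteq> b}) (2 * k)"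
    unfolding box_rep_def using Jint by blast
  then have "boxicity V (E \<union> {(a, b). a \<in> B \<and> b \<in> B \<and> a \<noteq> b}) \<le> 2 * k"
    unfolding boxicity_def by (rule Least_le)
  then show ?thesis unfolding k_def .
qed

end
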